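(* The function $g_1(y):=y\,\widehat\rho(y)(1-\widehat\omega(y))$ satisfies $g_1(\widehat\zeta(z))=\widehat\rho(\widehat\zeta(z))\,\big(\widehat\zeta(z)-z\widehat\zeta'(z)\big)$ for $z>0$, and $$\widehat v(y)\,g_1'(y)+g_1(y)>0\qquad\text{for all }y\in(0,y_* ).$$
   Context: LP profile: $(\widehat\rho,\widehat\omega)$ real-analytic, even, solving $\widehat\rho'=-\frac{2y\widehat\rho\widehat\omega(\widehat\rho-\widehat\omega)}{1-y^2\widehat\omega^2}$, $\widehat\omega'=\frac{1-3\widehat\omega}{y}+\frac{2y\widehat\omega^2(\widehat\rho-\widehat\omega)}{1-y^2\widehat\omega^2}$, $\widehat\omega(0)=\frac13$, $\widehat\rho(0)>\frac13$, $\widehat\omega\to1$, $y^2\widehat\rho\to\ell\in(0,\infty)$ at infinity, $\widehat\rho'<0<\widehat\omega'$ on $(0,\infty)$; $\widehat v:=y\widehat\omega$ has unique sonic point $y_*\in(2,3)$ with $\widehat v(y_* )=1$. $\widehat\zeta$: increasing solution of $z\widehat\zeta'=\widehat\zeta\,\widehat\omega(\widehat\zeta)$ with $z^{-1/3}\widehat\zeta(z)\to1$ as $z\to0$. *)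

theory Defs
  imports "HOL-Analysis.Analysis"
begin

definition real_analytic_on :: "(real \<Rightarrow> real) \<Rightarrow> real set \<Rightarrow> bool" where
  "real_analytic_on f S \<longleftrightarrow>
     (\<forall>x\<in>S. \<exists>r>0. \<exists>c::nat \<Rightarrow> real. \<forall>y. \<bar>y - x\<bar> < r \<longrightarrow> (\<lambda>n. c n * (y - x) ^ n) sums f y)"

definition LP_profile :: "(real \<Rightarrow> real) \<Rightarrow> (real \<Rightarrow> real) \<Rightarrow> real \<Rightarrow> real \<Rightarrow> bool" where
  "LP_profile \<rho> \<omega> L ys \<longleftrightarrow>
     real_analytic_on \<rho> UNIV \<and> real_analytic_on \<omega> UNIV \<and>
     (\<forall>y. \<rho> (-y) = \<rho> y) \<and> (\<forall>y. \<omega> (-y) = \<omega> y) \<and>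
     (\<forall>y>0. y\<^sup>2 * (\<omega> y)\<^sup>2 \<noteq> 1 \<longrightarrow>
        deriv \<rho> y = - (2 * y * \<rho> y * \<omega> y * (\<rho> y - \<omega> y)) / (1 - y\<^sup>2 * (\<omega> y)\<^sup>2) \<and>
        deriv \<omega> y = (1 - 3 * \<omega> y) / y + 2 * y * (\<omega> y)\<^sup>2 * (\<rho> y - \<omega> y) / (1 - y\<^sup>2 * (\<omega> y)\<^sup>2)) \<and>
     \<omega> 0 = 1/3 \<and> \<rho> 0 > 1/3 \<and>
     (\<omega> \<longlongrightarrow> 1) at_top \<and>
     0 < L \<and> ((\<lambda>y. y\<^sup>2 * \<rho> y) \<longlongrightarrow> L) at_top \<and>
     (\<forall>y>0. deriv \<rho> y < 0 \<and> 0 < deriv \<omega> y) \<and>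
     2 < ys \<and> ys < 3 \<and> (\<forall>y>0. y * \<omega> y = 1 \<longleftrightarrow> y = ys)"

definition LP_zeta :: "(real \<Rightarrow> real) \<Rightarrow> (real \<Rightarrow> real) \<Rightarrow> bool" where
  "LP_zeta \<omega> \<zeta> \<longleftrightarrow>
     strict_mono_on {0<..} \<zeta> \<and>
     (\<forall>z>0. (\<zeta> has_real_derivative deriv \<zeta> z) (at z) \<and> z * deriv \<zeta> z = \<zeta> z * \<omega> (\<zeta> z)) \<and>
     ((\<lambda>z. z powr (-1/3) * \<zeta> z) \<longlongrightarrow> 1) (at_right 0)"

end

theory Submission
  imports Defs
begin
lemma ra_local:
  assumes "real_analytic_on f UNIV"
  shows "\<exists>r>0. \<exists>q. isCont q 0 \<and> (\<forall>y. \<bar>y - x\<bar> < r \<longrightarrow> (f has_real_derivative q (y - x)) (at y))"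
proof -
  obtain r c where r: "r > 0" and sc: "\<And>y. \<bar>y - x\<bar> < r \<Longrightarrow> (\<lambda>n. c n * (y - x) ^ n) sums f y"
    using assms unfolding real_analytic_on_def by blast
  have sm: "\<And>h. norm h < r \<Longrightarrow> summable (\<lambda>n. c n * h ^ n)"
  proof -
    fix h :: real assume "norm h < r"
    then have "\<bar>(x + h) - x\<bar> < r" by simp
    from sc[OF this] show "summable (\<lambda>n. c n * h ^ n)" by (simp add: sums_iff)
  qed
  have smd: "\<And>h. norm h < r \<Longrightarrow> summable (\<lambda>n. diffs c n * h ^ n)"
    by (rule termdiff_converges[OF _ sm]) auto
  define q where "q = (\<lambda>h::real. \<Sum>n. diffs c n * h ^ n)"
  have qc: "isCont q 0"
    unfolding q_def using termdiffs_strong'[of r "diffs c" 0, OF smd] r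
    by (auto intro: DERIV_isCont)
  have "(f has_real_derivative q (y - x)) (at y)" if y: "\<bar>y - x\<bar> < r" for y
  proof -
    have d1: "((\<lambda>h. \<Sum>n. c n * h ^ n) has_real_derivative q (y - x)) (at (y - x))"
      unfolding q_def by (rule termdiffs_strong'[OF sm]) (use y in auto)
    have d2: "((\<lambda>t. \<Sum>n. c n * (t - x) ^ n) has_real_derivative q (y - x)) (at y)"
    proof -
      have "((\<lambda>t. t - x) has_real_derivative 1) (at y)" by (auto intro!: derivative_eq_intros)
      from DERIV_chain2[OF d1 this] show ?thesis by simp
    qed
    have ev: "eventually (\<lambda>t. (\<Sum>n. c n * (t - x) ^ n) = f t) (nhds y)"
    proof -
      have "open {t. \<bar>t - x\<bar> < r}" 
        by (rule open_Collect_less) (auto intro!: continuous_intros)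
      then have "eventually (\<lambda>t. t \<in> {t. \<bar>t - x\<bar> < r}) (nhds y)"
        using y by (intro eventually_nhds_in_open) auto
      then show ?thesis by eventually_elim (use sc in \<open>auto simp: sums_iff\<close>)
    qed
    show ?thesis using d2 DERIV_cong_ev[OF refl ev refl] by simp
  qed
  then show ?thesis using r qc by blast
qed

lemma ra_deriv:
  assumes "real_analytic_on f UNIV"
  shows "(f has_real_derivative deriv f x) (at x)" and "isCont (deriv f) x"
proof -
  obtain r q where r: "r > 0" and qc: "isCont q 0" and d: "\<And>y. \<bar>y - x\<bar> < r \<Longrightarrow> (f has_real_derivative q (y - x)) (at y)"
    using ra_local[OF assms, of x] by blast
  have dd: "\<And>y. \<bar>y - x\<bar> < r \<Longrightarrow> deriv f y = q (y - x)"
    using d DERIV_imp_deriv by blast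
  show "(f has_real_derivative deriv f x) (at x)" using d[of x] dd[of x] r by simp
  have c2: "isCont (\<lambda>y. q (y - x)) x"
  proof -
    have "isCont (\<lambda>y. y - x) x" by simp
    from isCont_o2[OF this] qc show ?thesis by simp
  qed
  have ev: "eventually (\<lambda>y. deriv f y = q (y - x)) (nhds x)"
  proof -
    have "open {t. \<bar>t - x\<bar> < r}" 
      by (rule open_Collect_less) (auto intro!: continuous_intros)
    then have "eventually (\<lambda>t. t \<in> {t. \<bar>t - x\<bar> < r}) (nhds x)"
      using r by (intro eventually_nhds_in_open) auto
    then show ?thesis by eventually_elim (use dd in auto)
  qed
  show "isCont (deriv f) x"
    using c2 isCont_cong[OF ev] by simp
qed

lemma poly_pos: fixes w :: real assumes w0: "0 < w" and w1: "w < 1"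
  shows "0 < 3 - 3*w - 2*w^2 + 4*w^3"
proof (cases "w \<ge> 1/2")
  case True
  have a: "2*w^2*(2*w - 1) \<ge> 0" using True by (intro mult_nonneg_nonneg) auto
  have "3 - 3*w - 2*w^2 + 4*w^3 = 3*(1-w) + 2*w^2*(2*w - 1)" by (simp add: algebra_simps power2_eq_square power3_eq_cube)
  moreover have "3*(1-w) > 0" using w1 by simp
  ultimately show ?thesis using a by linarith
next
  case False
  have "w*w \<le> (1/2)*(1/2)" using False w0 by (intro mult_mono) auto
  then have "2*w^2 \<le> 1/2" by (simp add: power2_eq_square)
  moreover have "w^3 \<ge> 0" using w0 by simp
  ultimately show ?thesis using False by linarith
qed
lemma alg_deriv:
  fixes y w r rd wd P D sq :: real
  assumes y: "y > 0" and w: "0 < w" "w < 1"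
    and sq: "sq = (y*w)^2" and D: "D = 1 - sq" and sD: "sq < 1"
    and P: "P = 1 - w + 2*w^2"
    and F0: "2* sq*(r-w) = P*D"
    and rd: "rd = -(2*y*r*w*(r-w))/D"
    and wd: "wd = (1-3*w)/y + 2*y*w^2*(r-w)/D"
  shows "0 < 2*(2*(y*w)*(w + y*wd))*(r-w) + 2*(y*w)^2*(rd - wd) - (4*w - 1)*wd*D + P*(2*(y*w)*(w+y*wd))"
proof -
  have Dp: "D > 0" using D sD by simp
  have sp: "sq > 0" using sq y w by simp
  have e3: "r - w = P*D/(2* sq)" using F0 sp by (simp add: field_simps)
  have e1: "wd = (1 - 3*w + P)/y"
  proof -
    have q: "(r-w)/D = P/(2* sq)" using F0 Dp sp by (simp add: field_simps)
    have "2*y*w^2*(r-w)/D = 2*y*w^2*((r-w)/D)" by simp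
    also have "\<dots> = 2*y*w^2*(P/(2* sq))" using q by simp
    also have "\<dots> = P/y" using sq y w by (simp add: field_simps power2_eq_square)
    finally have "2*y*w^2*(r-w)/D = P/y" .
    then show ?thesis using wd y by (simp add: field_simps)
  qed
  have e2: "rd = -(r*P)/(y*w)"
  proof -
    have q: "(r-w)/D = P/(2* sq)" using F0 Dp sp by (simp add: field_simps)
    have "2*y*r*w*(r-w)/D = 2*y*r*w*((r-w)/D)" by simp
    also have "\<dots> = 2*y*r*w*(P/(2* sq))" using q by simp
    also have "\<dots> = r*P/(y*w)" using sq y w by (simp add: field_simps power2_eq_square)
    finally have "2*y*r*w*(r-w)/D = r*P/(y*w)" .
    then show ?thesis using rd by simp
  qed
  have r: "r = w + P*D/(2* sq)" using e3 by simp
  define C0 where "C0 = (1-w)*(3 - 3*w - 2*w^2 + 4*w^3)"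
  define C1 where "C1 = 4*(1-w)^2*(1 - 2*w + 2*w^2)"
  have C0p: "C0 > 0" unfolding C0_def using poly_pos[OF w] w by simp
  have "1 - 2*w + 2*w^2 = (1-w)^2 + w^2" by (simp add: power2_eq_square algebra_simps)
  moreover have "(1-w)^2 > 0" "w^2 \<ge> 0" using w by auto
  ultimately have "1 - 2*w + 2*w^2 > 0" by linarith
  moreover have "(1-w)^2 > 0" using w by simp
  ultimately have C1p: "C1 > 0" unfolding C1_def by (intro mult_pos_pos) auto
  have key: "y*w*(2*(2*(y*w)*(w + y*wd))*(r-w) + 2*(y*w)^2*(rd - wd) - (4*w - 1)*wd*D + P*(2*(y*w)*(w+y*wd)))
      = D*C0 + sq*C1"
    unfolding e1 e2 r C0_def C1_def P sq D using y w sp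
    by (simp add: field_simps power2_eq_square power3_eq_cube)
  have pos: "D*C0 + sq*C1 > 0" using Dp sp C0p C1p by (simp add: add_pos_pos)
  define E where "E = 2*(2*(y*w)*(w + y*wd))*(r-w) + 2*(y*w)^2*(rd - wd) - (4*w - 1)*wd*D + P*(2*(y*w)*(w+y*wd))"
  have "y*w*E > 0" using key pos unfolding E_def by linarith
  moreover have "y*w > 0" using y w by simp
  ultimately have "E > 0" by (metis zero_less_mult_pos)
  then show ?thesis unfolding E_def .
qed

lemma left_lim_eq:
  fixes h :: "real \<Rightarrow> real"
  assumes "isCont h a" "b < a" "\<And>y. b < y \<Longrightarrow> y < a \<Longrightarrow> h y = c"
  shows "h a = c"
proof -
  have l1: "(h \<longlongrightarrow> h a) (at_left a)" using assms(1) by (simp add: filterlim_at_split isCont_def)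
  have "eventually (\<lambda>y. h y = c) (at_left a)"
    using eventually_at_left_real[OF assms(2)] by eventually_elim (use assms(3) in auto)
  then have l2: "(h \<longlongrightarrow> c) (at_left a)" by (rule tendsto_eventually)
  show ?thesis using tendsto_unique[OF _ l1 l2] by simp
qed

lemma at_left_of_at:
  fixes f :: "real \<Rightarrow> real"
  assumes "(f \<longlongrightarrow> l) (at a)" shows "(f \<longlongrightarrow> l) (at_left a)"
  using assms by (simp add: filterlim_at_split)

theorem lemmaL:
  fixes \<rho> \<omega> \<zeta> :: "real \<Rightarrow> real" and L ys :: real
  assumes "LP_profile \<rho> \<omega> L ys" and "LP_zeta \<omega> \<zeta>"
  defines "g1 \<equiv> \<lambda>y. y * \<rho> y * (1 - \<omega> y)"
  shows "(\<forall>z>0. g1 (\<zeta> z) = \<rho> (\<zeta> z) * (\<zeta> z - z * deriv \<zeta> z)) \<and>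
         (\<forall>y. 0 < y \<and> y < ys \<longrightarrow> (y * \<omega> y) * deriv g1 y + g1 y > 0)"
proof (intro conjI allI impI)
  fix z :: real assume z: "z > 0"
  have "z * deriv \<zeta> z = \<zeta> z * \<omega> (\<zeta> z)" using assms(2) z unfolding LP_zeta_def by blast
  then show "g1 (\<zeta> z) = \<rho> (\<zeta> z) * (\<zeta> z - z * deriv \<zeta> z)"
    unfolding g1_def by (simp add: algebra_simps)
next
  fix y0 :: real assume y0: "0 < y0 \<and> y0 < ys"
  note P = assms(1)[unfolded LP_profile_def]
  have raR: "real_analytic_on \<rho> UNIV" and raW: "real_analytic_on \<omega> UNIV" using P by auto
  have dR: "\<And>x. (\<rho> has_real_derivative deriv \<rho> x) (at x)" using ra_deriv(1)[OF raR] by blast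
  have dW: "\<And>x. (\<omega> has_real_derivative deriv \<omega> x) (at x)" using ra_deriv(1)[OF raW] by blast
  have cdR: "\<And>x. isCont (deriv \<rho>) x" using ra_deriv(2)[OF raR] by blast
  have cdW: "\<And>x. isCont (deriv \<omega>) x" using ra_deriv(2)[OF raW] by blast
  have cR: "\<And>x. isCont \<rho> x" using dR DERIV_isCont by blast
  have cW: "\<And>x. isCont \<omega> x" using dW DERIV_isCont by blast
  have cRo: "continuous_on S \<rho>" for S using cR by (simp add: continuous_at_imp_continuous_on)
  have cWo: "continuous_on S \<omega>" for S using cW by (simp add: continuous_at_imp_continuous_on)
  have ode: "\<And>y. 0 < y \<Longrightarrow> y\<^sup>2 * (\<omega> y)\<^sup>2 \<noteq> 1 \<Longrightarrow>
        deriv \<rho> y = - (2 * y * \<rho> y * \<omega> y * (\<rho> y - \<omega> y)) / (1 - y\<^sup>2 * (\<omega> y)\<^sup>2) \<and>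
        deriv \<omega> y = (1 - 3 * \<omega> y) / y + 2 * y * (\<omega> y)\<^sup>2 * (\<rho> y - \<omega> y) / (1 - y\<^sup>2 * (\<omega> y)\<^sup>2)"
    using P by blast
  have W0: "\<omega> 0 = 1/3" using P by blast
  have Wlim: "(\<omega> \<longlongrightarrow> 1) at_top" using P by blast
  have L0: "0 < L" and Rlim: "((\<lambda>y. y\<^sup>2 * \<rho> y) \<longlongrightarrow> L) at_top" using P by blast+
  have mon: "\<And>y. 0 < y \<Longrightarrow> deriv \<rho> y < 0 \<and> 0 < deriv \<omega> y" using P by blast
  have ys2: "2 < ys" using P by blast
  have son: "\<And>y. 0 < y \<Longrightarrow> y * \<omega> y = 1 \<longleftrightarrow> y = ys" using P by blast
  have ysp: "ys > 0" using ys2 by simp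

  have Winc: "\<omega> a < \<omega> b" if "0 \<le> a" "a < b" for a b
  proof (rule DERIV_pos_imp_increasing_open[OF that(2) _ cWo])
    fix x assume "a < x" "x < b"
    then have "x > 0" using that by linarith
    then show "\<exists>y. DERIV \<omega> x :> y \<and> y > 0" using dW mon by blast
  qed
  have Rdec: "\<rho> a > \<rho> b" if "0 \<le> a" "a < b" for a b
  proof (rule DERIV_neg_imp_decreasing_open[OF that(2) _ cRo])
    fix x assume "a < x" "x < b"
    then have "x > 0" using that by linarith
    then show "\<exists>y. DERIV \<rho> x :> y \<and> y < 0" using dR mon by blast
  qed
  have Wgt: "\<omega> y > 1/3" if "y > 0" for y using Winc[of 0 y] that W0 by simp
  have Wlt: "\<omega> y < 1" if "y \<ge> 0" for y
  proof -
    have "eventually (\<lambda>t. \<omega> (y+1) \<le> \<omega> t) at_top"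
      using eventually_ge_at_top[of "y+1"] proof eventually_elim
      case (elim t)
      show ?case
      proof (cases "t = y + 1")
        case False
        then have "y + 1 < t" using elim by simp
        then show ?thesis using Winc[of "y+1" t] that by simp
      qed simp
    qed
    then have "\<omega> (y+1) \<le> 1" by (rule tendsto_lowerbound[OF Wlim]) simp
    then show ?thesis using Winc[of y "y+1"] that by simp
  qed
  have Rpos: "\<rho> y > 0" if "y \<ge> 0" for y
  proof -
    have "eventually (\<lambda>t. t\<^sup>2 * \<rho> t > 0 \<and> t > y) at_top"
      by (rule eventually_conj[OF order_tendstoD(1)[OF Rlim L0] eventually_gt_at_top])
    then have "\<exists>t. t\<^sup>2 * \<rho> t > 0 \<and> t > y" by (rule eventually_happens'[OF trivial_limit_at_top_linorder])
    then obtain t where t: "t\<^sup>2 * \<rho> t > 0" "t > y" by blast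
    then have "\<rho> t > 0" by (simp add: zero_less_mult_iff)
    then show ?thesis using Rdec[of y t] t that by simp
  qed
  have vlt: "y * \<omega> y < 1" if yy: "0 < y" "y < ys" for y
  proof (rule ccontr)
    assume "\<not> y * \<omega> y < 1"
    then have "(\<lambda>t. t * \<omega> t) 0 \<le> 1" "1 \<le> (\<lambda>t. t * \<omega> t) y" by auto
    moreover have "continuous_on {0..y} (\<lambda>t. t * \<omega> t)" by (intro continuous_intros cWo)
    ultimately obtain x where x: "0 \<le> x" "x \<le> y" "x * \<omega> x = 1" using IVT'[of "\<lambda>t. t * \<omega> t" 0 1 y] yy by auto
    then have "x > 0" by (cases "x = 0") auto
    then have "x = ys" using son x by blast
    then show False using x yy by simp
  qed
  have vys: "ys * \<omega> ys = 1" using son ysp by blast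
  have Dpos: "0 < 1 - y\<^sup>2 * (\<omega> y)\<^sup>2" if "0 < y" "y < ys" for y
  proof -
    have "y * \<omega> y > 0" using that Wgt[of y] by simp
    then have "(y * \<omega> y)^2 < 1" using vlt[OF that] by (simp add: power_less_one_iff abs_less_iff)
    then show ?thesis by (simp add: power_mult_distrib)
  qed
  have odeI: "deriv \<rho> y = - (2 * y * \<rho> y * \<omega> y * (\<rho> y - \<omega> y)) / (1 - y\<^sup>2 * (\<omega> y)\<^sup>2) \<and>
        deriv \<omega> y = (1 - 3 * \<omega> y) / y + 2 * y * (\<omega> y)\<^sup>2 * (\<rho> y - \<omega> y) / (1 - y\<^sup>2 * (\<omega> y)\<^sup>2)"
    if "0 < y" "y < ys" for y
    using ode[of y] Dpos[OF that] that by simp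
  have RgtW: "\<rho> y > \<omega> y" if "0 < y" "y < ys" for y
  proof -
    have "- (2 * y * \<rho> y * \<omega> y * (\<rho> y - \<omega> y)) / (1 - y\<^sup>2 * (\<omega> y)\<^sup>2) < 0"
      using odeI[OF that] mon[of y] that by simp
    then have h: "2 * y * \<rho> y * \<omega> y * (\<rho> y - \<omega> y) / (1 - y\<^sup>2 * (\<omega> y)\<^sup>2) > 0"
      by (simp only: neg_divide_le_eq divide_minus_left neg_less_0_iff_less)
    have "2 * y * \<rho> y * \<omega> y * (\<rho> y - \<omega> y) = (2 * y * \<rho> y * \<omega> y * (\<rho> y - \<omega> y) / (1 - y\<^sup>2 * (\<omega> y)\<^sup>2)) * (1 - y\<^sup>2 * (\<omega> y)\<^sup>2)"
      using Dpos[OF that] by simp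
    then have "2 * y * \<rho> y * \<omega> y * (\<rho> y - \<omega> y) > 0" using h Dpos[OF that] by (metis mult_pos_pos)
    moreover have "2 * y * \<rho> y * \<omega> y > 0" using that Rpos[of y] Wgt[of y] by simp
    ultimately have "\<rho> y - \<omega> y > 0" by (metis zero_less_mult_pos)
    then show ?thesis by simp
  qed
  have Rys: "\<rho> ys = \<omega> ys"
  proof -
    define h where "h = (\<lambda>y. deriv \<rho> y * (1 - y\<^sup>2 * (\<omega> y)\<^sup>2) + 2 * y * \<rho> y * \<omega> y * (\<rho> y - \<omega> y))"
    have hc: "isCont h ys" unfolding h_def by (intro continuous_intros cdR cR cW)
    have hz: "h y = 0" if "0 < y" "y < ys" for y
      using odeI[OF that] Dpos[OF that] unfolding h_def by (simp add: field_simps)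
    have "h ys = 0" by (rule left_lim_eq[OF hc ysp hz])
    moreover have "ys\<^sup>2 * (\<omega> ys)\<^sup>2 = 1" using vys by (metis power_mult_distrib power_one)
    ultimately have "2 * ys * \<rho> ys * \<omega> ys * (\<rho> ys - \<omega> ys) = 0" unfolding h_def by simp
    moreover have "2 * ys * \<rho> ys * \<omega> ys \<noteq> 0" using ysp Rpos[of ys] Wgt[of ys] by simp
    ultimately show ?thesis by simp
  qed
  define w where "w = \<omega> ys"
  define a where "a = deriv \<rho> ys"
  define b where "b = deriv \<omega> ys"
  have wp: "w > 0" using Wgt[OF ysp] by (simp add: w_def)
  have bp: "b > 0" using mon[OF ysp] by (simp add: b_def)
  have ysw: "ys * w = 1" using vys w_def by simp
  have ysw2: "ys\<^sup>2 * w\<^sup>2 = 1" using ysw by (metis power_mult_distrib power_one)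
  define D where "D = (\<lambda>y. 1 - y\<^sup>2 * (\<omega> y)\<^sup>2)"
  define G where "G = (\<lambda>y. 2 * (y\<^sup>2 * (\<omega> y)\<^sup>2) * (\<rho> y - \<omega> y) / D y)"
  have ev0: "eventually (\<lambda>y. 0 < y \<and> y < ys) (at_left ys)"
    using eventually_at_left_real[OF ysp] by eventually_elim auto
  have G1: "(G \<longlongrightarrow> -a/w) (at_left ys)"
  proof -
    have "isCont (\<lambda>y. -(y * \<omega> y) * deriv \<rho> y / \<rho> y) ys"
      using Rpos[of ys] ysp by (intro continuous_intros cR cW cdR) auto
    then have "((\<lambda>y. -(y * \<omega> y) * deriv \<rho> y / \<rho> y) \<longlongrightarrow> -(ys * \<omega> ys) * deriv \<rho> ys / \<rho> ys) (at_left ys)"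
      by (intro at_left_of_at) (simp add: isCont_def)
    moreover have "-(ys * \<omega> ys) * deriv \<rho> ys / \<rho> ys = -a/w" using ysw Rys by (simp add: w_def a_def)
    moreover have "eventually (\<lambda>y. -(y * \<omega> y) * deriv \<rho> y / \<rho> y = G y) (at_left ys)"
      using ev0
    proof eventually_elim
      case (elim y)
      then have yy: "0 < y" "y < ys" by auto
      have "D y > 0" using Dpos[OF yy] by (simp add: D_def)
      moreover have "\<rho> y > 0" using Rpos[of y] yy by simp
      moreover have rdE: "deriv \<rho> y = - (2 * y * \<rho> y * \<omega> y * (\<rho> y - \<omega> y)) / D y"
        using odeI[OF yy] unfolding D_def by blast
      ultimately show ?case unfolding G_def rdE
        by (simp add: field_simps power2_eq_square)
    qed
    ultimately show ?thesis by (simp add: tendsto_cong)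
  qed
  have G2: "(G \<longlongrightarrow> ys * b - 1 + 3 * w) (at_left ys)"
  proof -
    have "isCont (\<lambda>y. y * deriv \<omega> y - 1 + 3 * \<omega> y) ys"
      by (intro continuous_intros cW cdW)
    then have "((\<lambda>y. y * deriv \<omega> y - 1 + 3 * \<omega> y) \<longlongrightarrow> ys * b - 1 + 3 * w) (at_left ys)"
      by (intro at_left_of_at) (simp add: isCont_def b_def w_def)
    moreover have "eventually (\<lambda>y. y * deriv \<omega> y - 1 + 3 * \<omega> y = G y) (at_left ys)"
      using ev0
    proof eventually_elim
      case (elim y)
      then have yy: "0 < y" "y < ys" by auto
      have "D y > 0" using Dpos[OF yy] by (simp add: D_def)
      then show ?case using odeI[OF yy] yy unfolding G_def D_def
        by (simp add: field_simps power2_eq_square)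
    qed
    ultimately show ?thesis by (simp add: tendsto_cong)
  qed
  define Dd where "Dd = -(2 * ys * w\<^sup>2 + ys\<^sup>2 * (2 * w * b))"
  have DdE: "Dd = -2 * (w + ys * b)" unfolding Dd_def using ysw
    by (simp add: power2_eq_square algebra_simps) (metis mult.assoc mult.commute mult.left_commute mult_1)
  have Ddn: "Dd \<noteq> 0"
  proof -
    have "w + ys * b > 0" using wp bp ysp by (simp add: add_pos_pos)
    then have "Dd < 0" unfolding DdE by (smt (verit))
    then show ?thesis by simp
  qed
  have G3: "(G \<longlongrightarrow> 2 * (ys\<^sup>2 * w\<^sup>2) * (a - b) / Dd) (at_left ys)"
  proof -
    have d1: "((\<lambda>y. \<rho> y - \<omega> y) has_real_derivative a - b) (at ys)"
      unfolding a_def b_def by (intro derivative_intros dR dW)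
    have d2: "(D has_real_derivative Dd) (at ys)"
      unfolding D_def Dd_def w_def b_def by (auto intro!: derivative_eq_intros dW)
    have q1: "((\<lambda>y. ((\<rho> y - \<omega> y) - (\<rho> ys - \<omega> ys)) / (y - ys)) \<longlongrightarrow> a - b) (at_left ys)"
      using d1 by (intro at_left_of_at) (simp add: has_field_derivative_iff)
    have q2: "((\<lambda>y. (D y - D ys) / (y - ys)) \<longlongrightarrow> Dd) (at_left ys)"
      using d2 by (intro at_left_of_at) (simp add: has_field_derivative_iff)
    have "((\<lambda>y. 2 * (y\<^sup>2 * (\<omega> y)\<^sup>2) * (((\<rho> y - \<omega> y) - (\<rho> ys - \<omega> ys)) / (y - ys)) / ((D y - D ys) / (y - ys)))
        \<longlongrightarrow> 2 * (ys\<^sup>2 * w\<^sup>2) * (a - b) / Dd) (at_left ys)"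
    proof (intro tendsto_intros q1 q2 Ddn)
      show "((\<lambda>y. \<omega> y) \<longlongrightarrow> w) (at_left ys)"
        using cW[of ys] by (intro at_left_of_at) (simp add: isCont_def w_def)
    qed
    moreover have "eventually (\<lambda>y. 2 * (y\<^sup>2 * (\<omega> y)\<^sup>2) * (((\<rho> y - \<omega> y) - (\<rho> ys - \<omega> ys)) / (y - ys)) / ((D y - D ys) / (y - ys)) = G y) (at_left ys)"
      using ev0
    proof eventually_elim
      case (elim y)
      then have yy: "0 < y" "y < ys" by auto
      have "D y > 0" using Dpos[OF yy] by (simp add: D_def)
      moreover have "D ys = 0" unfolding D_def using ysw2 w_def by simp
      moreover have "y - ys \<noteq> 0" using yy by simp
      ultimately show ?case using Rys unfolding G_def by (simp add: field_simps)
    qed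
    ultimately show ?thesis by (simp add: tendsto_cong)
  qed
  have gw: "-a/w = w"
  proof -
    define g where "g = -a/w"
    have e1: "a = -w*g" using wp unfolding g_def by simp
    have e2: "ys*b = g + 1 - 3*w" using tendsto_unique[OF _ G1 G2] unfolding g_def by simp
    have "g = 2 * (ys\<^sup>2 * w\<^sup>2) * (a - b) / Dd" using tendsto_unique[OF _ G1 G3] unfolding g_def by simp
    then have e3: "g * Dd = 2 * (a - b)" using Ddn ysw2 by (simp add: field_simps)
    have e4: "b = w * (g + 1 - 3*w)" using e2 ysw by (metis mult.assoc mult.commute mult_1)
    have f1: "g * Dd = g * (-2 * (w + (g + 1 - 3*w)))" unfolding DdE e2 ..
    have f2: "2 * (a - b) = 2 * (-w*g - w * (g + 1 - 3*w))" unfolding e1 e4 by simp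
    have "g * (-2 * (w + (g + 1 - 3*w))) = 2 * (-w*g - w * (g + 1 - 3*w))"
      using e3 f1 f2 by simp
    then have "(g - w) * (g + 1 - 3*w) = 0" by (simp add: algebra_simps)
    moreover have "g + 1 - 3*w > 0" using e2 mult_pos_pos[OF ysp bp] by linarith
    ultimately show ?thesis unfolding g_def by simp
  qed
  define PP where "PP = (\<lambda>y. 1 - \<omega> y + 2 * (\<omega> y)\<^sup>2)"
  have Hlim: "((\<lambda>y. G y - PP y) \<longlongrightarrow> w - (1 - w + 2 * w\<^sup>2)) (at_left ys)"
  proof (rule tendsto_diff)
    show "(G \<longlongrightarrow> w) (at_left ys)" using G1 gw by simp
    have "isCont PP ys" unfolding PP_def by (intro continuous_intros cW)
    then show "(PP \<longlongrightarrow> 1 - w + 2 * w\<^sup>2) (at_left ys)"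
      by (intro at_left_of_at) (simp add: isCont_def PP_def w_def)
  qed
  have neg: "w - (1 - w + 2 * w\<^sup>2) < 0"
  proof -
    have "(1 - w)\<^sup>2 + w\<^sup>2 > 0" using wp by (simp add: add_nonneg_pos)
    moreover have "(1 - w)\<^sup>2 + w\<^sup>2 = (1 - w + 2 * w\<^sup>2) - w" by (simp add: power2_eq_square algebra_simps)
    ultimately show ?thesis by linarith
  qed
  have evH: "eventually (\<lambda>y. G y - PP y < 0) (at_left ys)" using order_tendstoD(2)[OF Hlim neg] .
  have "\<exists>b<ys. \<forall>y>b. y < ys \<longrightarrow> G y - PP y < 0" using evH[unfolded eventually_at_left[OF ysp]] .
  then obtain b0 where b0: "b0 < ys" and b0H0: "\<forall>y>b0. y < ys \<longrightarrow> G y - PP y < 0" by blast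
  have b0H: "G y - PP y < 0" if "b0 < y" "y < ys" for y using b0H0 that by blast
  define b1 where "b1 = max b0 0"
  have b1: "b1 < ys" "0 \<le> b1" "b0 \<le> b1" using b0 ysp unfolding b1_def by auto
  define F where "F = (\<lambda>y. 2 * (y * \<omega> y)\<^sup>2 * (\<rho> y - \<omega> y) - (1 - \<omega> y + 2 * (\<omega> y)\<^sup>2) * (1 - (y * \<omega> y)\<^sup>2))"
  have FDH: "F y = D y * (G y - PP y)" if yy: "0 < y" "y < ys" for y
  proof -
    have "D y > 0" using Dpos[OF yy] by (simp add: D_def)
    then show ?thesis unfolding F_def G_def PP_def D_def by (simp add: field_simps power_mult_distrib)
  qed
  have Fneg_near: "F y < 0" if "b1 < y" "y < ys" for y
  proof -
    have yy: "0 < y" "y < ys" using that b1 by auto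
    have "D y > 0" using Dpos[OF yy] by (simp add: D_def)
    moreover have "G y - PP y < 0" using b0H[of y] that b1 by simp
    ultimately show ?thesis using FDH[OF yy] by (simp add: mult_pos_neg)
  qed
  have cF: "isCont F x" for x unfolding F_def by (intro continuous_intros cR cW)
  have cFo: "continuous_on UNIV F" using cF by (simp add: continuous_at_imp_continuous_on)
  have Fder: "\<exists>Fd. (F has_real_derivative Fd) (at y) \<and> Fd > 0" if yy: "0 < y" "y < ys" and F0: "F y = 0" for y
  proof -
    define E where "E = 2*(2*(y*\<omega> y)*(\<omega> y + y*deriv \<omega> y))*(\<rho> y-\<omega> y) + 2*(y*\<omega> y)^2*(deriv \<rho> y - deriv \<omega> y) - (4*\<omega> y - 1)*deriv \<omega> y*(1 - (y*\<omega> y)^2) + (1 - \<omega> y + 2*(\<omega> y)^2)*(2*(y*\<omega> y)*(\<omega> y + y*deriv \<omega> y))"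
    have "(F has_real_derivative E) (at y)"
      unfolding F_def E_def
      by (rule derivative_eq_intros dR dW refl | simp add: algebra_simps power2_eq_square)+
    moreover have "E > 0" unfolding E_def
    proof (rule alg_deriv[where sq = "(y*\<omega> y)^2" and D = "1 - (y*\<omega> y)^2" and P = "1 - \<omega> y + 2 * (\<omega> y)\<^sup>2"])
      show "0 < y" using yy by simp
      show "0 < \<omega> y" using Wgt[OF yy(1)] by simp
      show "\<omega> y < 1" using Wlt[of y] yy by simp
      show "(y * \<omega> y)\<^sup>2 < 1" using Dpos[OF yy] by (simp add: power_mult_distrib)
      show "2 * (y * \<omega> y)\<^sup>2 * (\<rho> y - \<omega> y) = (1 - \<omega> y + 2 * (\<omega> y)\<^sup>2) * (1 - (y * \<omega> y)\<^sup>2)"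
        using F0 unfolding F_def by simp
      show "deriv \<rho> y = - (2 * y * \<rho> y * \<omega> y * (\<rho> y - \<omega> y)) / (1 - (y * \<omega> y)\<^sup>2)"
        using odeI[OF yy] by (simp add: power_mult_distrib)
      show "deriv \<omega> y = (1 - 3 * \<omega> y) / y + 2 * y * (\<omega> y)\<^sup>2 * (\<rho> y - \<omega> y) / (1 - (y * \<omega> y)\<^sup>2)"
        using odeI[OF yy] by (simp add: power_mult_distrib)
    qed simp_all
    ultimately show ?thesis by blast
  qed
  have Fneg: "F y < 0" if yy: "0 < y" "y < ys" for y
  proof (rule ccontr)
    assume "\<not> F y < 0"
    then have Fy: "F y \<ge> 0" by simp
    have yb: "y \<le> b1"
    proof (rule ccontr)
      assume "\<not> y \<le> b1"
      then have "F y < 0" using Fneg_near[of y] yy by simp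
      then show False using Fy by simp
    qed
    define c where "c = (b1 + ys) / 2"
    have c: "b1 < c" "c < ys" using b1 unfolding c_def by auto
    have Fc: "F c < 0" using Fneg_near c by simp
    define S where "S = {y..c} \<inter> {t. 0 \<le> F t}"
    have yS: "y \<in> S" using yb c Fy unfolding S_def by simp
    have Sb: "bdd_above S" unfolding S_def by (rule bdd_aboveI[of _ c]) auto
    have Sc: "closed S" unfolding S_def
      by (intro closed_Int closed_atLeastAtMost closed_Collect_le continuous_on_const cFo)
    define m where "m = Sup S"
    have mS: "m \<in> S" unfolding m_def using closed_contains_Sup[OF _ Sb Sc] yS by blast
    have m: "y \<le> m" "m \<le> c" "0 \<le> F m" using mS unfolding S_def by auto
    have mc: "m < c" using m Fc by (cases "m = c") auto
    have mpos: "0 < m" "m < ys" using m yy c by auto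
    have after: "F t < 0" if t: "m < t" "t < ys" for t
    proof (cases "t \<le> c")
      case True
      show ?thesis
      proof (rule ccontr)
        assume "\<not> F t < 0"
        then have "t \<in> S" using True t m unfolding S_def by simp
        then have "t \<le> m" unfolding m_def by (rule cSup_upper[OF _ Sb])
        then show False using t by simp
      qed
    next
      case False
      then show ?thesis using Fneg_near[of t] c t by simp
    qed
    show False
    proof (cases "F m = 0")
      case True
      obtain Fd where Fd: "(F has_real_derivative Fd) (at m)" "Fd > 0" using Fder[OF mpos True] by blast
      obtain d where d: "d > 0" "\<And>h. h > 0 \<Longrightarrow> h < d \<Longrightarrow> F m < F (m + h)"
        using DERIV_pos_inc_right[OF Fd] by blast
      define h where "h = min (d/2) ((ys - m)/2)"
      have h1: "h \<le> (ys - m)/2" unfolding h_def by (rule min.cobounded2)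
      have h: "h > 0" "h < d" "m + h < ys" using d mpos h1 unfolding h_def by auto
      have "F (m + h) > 0" using d(2)[OF h(1) h(2)] True by simp
      moreover have "F (m + h) < 0" using after[of "m+h"] h by simp
      ultimately show False by simp
    next
      case False
      then have Fm: "F m > 0" using m by simp
      have "(F \<longlongrightarrow> F m) (at_right m)" using cF[of m] by (simp add: filterlim_at_split isCont_def)
      then have "eventually (\<lambda>t. F t > 0) (at_right m)" using order_tendstoD(1)[OF _ Fm] by blast
      moreover have "eventually (\<lambda>t. t \<in> {m<..<ys}) (at_right m)" using eventually_at_right_real[OF mpos(2)] .
      ultimately have "eventually (\<lambda>t. F t > 0 \<and> t \<in> {m<..<ys}) (at_right m)" by (rule eventually_conj)
      then obtain t where "F t > 0" "t \<in> {m<..<ys}"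
        using eventually_happens'[OF trivial_limit_at_right_real] by blast
      then show False using after[of t] by simp
    qed
  qed
  have y0p: "0 < y0" "y0 < ys" using y0 by auto
  have dg: "(g1 has_real_derivative (\<rho> y0 * (1 - \<omega> y0) + y0 * deriv \<rho> y0 * (1 - \<omega> y0) - y0 * \<rho> y0 * deriv \<omega> y0)) (at y0)"
    unfolding g1_def
    by (rule derivative_eq_intros dR dW refl | simp add: algebra_simps)+
  then have dgE: "deriv g1 y0 = \<rho> y0 * (1 - \<omega> y0) + y0 * deriv \<rho> y0 * (1 - \<omega> y0) - y0 * \<rho> y0 * deriv \<omega> y0"
    by (rule DERIV_imp_deriv)
  have Dp0: "D y0 > 0" using Dpos[OF y0p] by (simp add: D_def)
  have Wp0: "\<omega> y0 > 0" using Wgt[of y0] y0p by simp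
  have Rp0: "\<rho> y0 > 0" using Rpos[of y0] y0p by simp
  have rdG: "deriv \<rho> y0 = - \<rho> y0 * G y0 / (y0 * \<omega> y0)"
  proof -
    have rdE: "deriv \<rho> y0 = - (2 * y0 * \<rho> y0 * \<omega> y0 * (\<rho> y0 - \<omega> y0)) / D y0"
      using odeI[OF y0p] unfolding D_def by blast
    show ?thesis unfolding G_def rdE using Dp0 Wp0 y0p by (simp add: field_simps power2_eq_square)
  qed
  have wdG: "deriv \<omega> y0 = (1 - 3 * \<omega> y0 + G y0) / y0"
  proof -
    have "deriv \<omega> y0 = (1 - 3 * \<omega> y0) / y0 + 2 * y0 * (\<omega> y0)\<^sup>2 * (\<rho> y0 - \<omega> y0) / D y0"
      using odeI[OF y0p] unfolding D_def by blast
    then show ?thesis unfolding G_def using Dp0 Wp0 y0p by (simp add: field_simps power2_eq_square)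
  qed
  have Q: "(y0 * \<omega> y0) * deriv g1 y0 + g1 y0 = y0 * \<rho> y0 * (PP y0 - G y0)"
  proof -
    have "(y0 * \<omega> y0) * deriv g1 y0 + g1 y0 = (y0 * \<omega> y0) * (\<rho> y0 * (1 - \<omega> y0) + y0 * deriv \<rho> y0 * (1 - \<omega> y0) - y0 * \<rho> y0 * deriv \<omega> y0) + y0 * \<rho> y0 * (1 - \<omega> y0)"
      by (subst dgE) (simp only: g1_def)
    also have "\<dots> = y0 * \<rho> y0 * (PP y0 - G y0)"
      unfolding rdG wdG PP_def using Wp0 y0p by (simp add: field_simps power2_eq_square)
    finally show ?thesis .
  qed
  have "G y0 - PP y0 < 0"
  proof -
    have "D y0 * (G y0 - PP y0) < 0" using Fneg[OF y0p] FDH[OF y0p] by simp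
    then show ?thesis using Dp0 by (simp add: mult_less_0_iff)
  qed
  then have "PP y0 - G y0 > 0" by simp
  then show "(y0 * \<omega> y0) * deriv g1 y0 + g1 y0 > 0" unfolding Q using y0p Rp0 by simp
qed

end
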